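(* Let $A,B,C\in\mathfrak{sl}_4(\mathbb R)$ be diagonal matrices. Then the $G_2$-structure $(G_{A,B,C},\varphi)$ has torsion forms $\tau_0=0$, $\tau_1=0$, $\tau_2=-*d\psi$, $\tau_3=*d\varphi$, where $\psi=*\varphi$.
   Context: For commuting $A,B,C\in\mathfrak{sl}_4(\mathbb R)$, $\mathfrak g_{A,B,C}$ is the Lie algebra with basis $\{e_1,\dots,e_7\}$ in which $\langle e_7,e_1,e_2\rangle$ is an abelian subalgebra, $\mathfrak n=\langle e_3,\dots,e_6\rangle$ is an abelian ideal, and in the basis $\{e_3,\dots,e_6\}$, $\mathrm{ad}\,e_7|_{\mathfrak n}=A$, $\mathrm{ad}\,e_1|_{\mathfrak n}=B$, $\mathrm{ad}\,e_2|_{\mathfrak n}=C$; $G_{A,B,C}$ is the simply connected Lie group with this Lie algebra and $\varphi=e^{127}+e^{347}+e^{567}+e^{135}-e^{146}-e^{236}-e^{245}$ is the left-invariant positive 3-form ($\{e^i\}$ dual basis). The metric and orientation induced by $\varphi$ are those for which $\{e_1,\dots,e_7\}$ is an oriented orthonormal basis; $*$ is the corresponding Hodge star. The torsion forms of a $G_2$-structure $\varphi$ are the unique forms $\tau_i\in\Omega^i$, $i=0,1,2,3$ (with $\tau_2$ in the 14-dimensional and $\tau_3$ in the 27-dimensional $G_2$-irreducible component) such that $d\varphi=\tau_0\psi+3\tau_1\wedge\varphi+*\tau_3$ and $d\psi=4\tau_1\wedge\psi+\tau_2\wedge\varphi$. *)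

theory Defs
  imports Complex_Main "HOL-Library.Function_Algebras"
begin

text \<open>Left-invariant forms on the 7-dimensional Lie group are identified with
  elements of the exterior algebra of the dual of the Lie algebra with basis
  e_1,...,e_7 (indices 1..7). A form is represented by its coefficients:
  omega I is the coefficient of e^I = e^{i_1} wedge ... wedge e^{i_k},
  where I = {i_1 < ... < i_k} is a subset of {1..7}.\<close>

type_synonym form = "nat set \<Rightarrow> real"

definition deg_form :: "nat \<Rightarrow> form \<Rightarrow> bool" where
  "deg_form k \<omega> \<longleftrightarrow> (\<forall>I. \<omega> I \<noteq> 0 \<longrightarrow> I \<subseteq> {1..7} \<and> card I = k)"

definition basic :: "nat set \<Rightarrow> form" where
  "basic I = (\<lambda>K. if K = I then 1 else 0)"

text \<open>Sign of the shuffle: e^I wedge e^J = sgn_pair I J e^{I union J} (disjoint I, J).\<close>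
definition sgn_pair :: "nat set \<Rightarrow> nat set \<Rightarrow> real" where
  "sgn_pair I J = (-1) ^ card {(i, j). i \<in> I \<and> j \<in> J \<and> j < i}"

definition wedge :: "form \<Rightarrow> form \<Rightarrow> form" where
  "wedge \<alpha> \<beta> = (\<lambda>K. if K \<subseteq> {1..7}
      then (\<Sum>I\<in>Pow K. sgn_pair I (K - I) * \<alpha> I * \<beta> (K - I)) else 0)"

definition scal :: "real \<Rightarrow> form \<Rightarrow> form" where
  "scal a \<omega> = (\<lambda>K. a * \<omega> K)"

text \<open>Hodge star for the metric making e_1..e_7 orthonormal, orientation e^{1..7}:
  *e^I = sgn_pair I I^c e^{I^c}.\<close>
definition hodge :: "form \<Rightarrow> form" where
  "hodge \<omega> = (\<lambda>J. if J \<subseteq> {1..7}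
      then sgn_pair ({1..7} - J) J * \<omega> ({1..7} - J) else 0)"

text \<open>Evaluation omega(e_m, e_{r_1}, ..., e_{r_p}) with R = {r_1 < ... < r_p}.\<close>
definition ev_ins :: "form \<Rightarrow> nat \<Rightarrow> nat set \<Rightarrow> real" where
  "ev_ins \<omega> m R = (if m \<in> R then 0
      else (-1) ^ card {r \<in> R. r < m} * \<omega> (insert m R))"

text \<open>Exterior derivative of left-invariant forms (Chevalley--Eilenberg), for a Lie
  bracket with structure constants c: [e_i, e_j] = sum_m c i j m e_m:
  d omega(X_0..X_k) = sum_{a<b} (-1)^{a+b} omega([X_a,X_b], X_0, .., ^a, .., ^b, .., X_k).\<close>
definition dform :: "(nat \<Rightarrow> nat \<Rightarrow> nat \<Rightarrow> real) \<Rightarrow> form \<Rightarrow> form" where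
  "dform c \<omega> = (\<lambda>K. if K \<subseteq> {1..7} then
      (let xs = sorted_list_of_set K in
       \<Sum>a<length xs. \<Sum>b<length xs. if a < b then
         (-1) ^ (a + b) * (\<Sum>m\<in>{1..7}. c (xs ! a) (xs ! b) m *
              ev_ins \<omega> m (K - {xs ! a, xs ! b}))
       else 0)
    else 0)"

text \<open>Matrices in sl_4 are functions nat => nat => real with entries X p q, p,q in {1..4}.
  ad e_k restricted to n = <e_3,..,e_6> has matrix X in the basis e_3..e_6:
  [e_k, e_{2+q}] = sum_p X p q e_{2+p}.\<close>
definition adm :: "(nat \<Rightarrow> nat \<Rightarrow> real) \<Rightarrow> nat \<Rightarrow> nat \<Rightarrow> nat \<Rightarrow> nat \<Rightarrow> real" where
  "adm X k i j m =
     (if i = k \<and> j \<in> {3..6} \<and> m \<in> {3..6} then X (m - 2) (j - 2)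
      else if j = k \<and> i \<in> {3..6} \<and> m \<in> {3..6} then - X (m - 2) (i - 2)
      else 0)"

text \<open>Structure constants of g_{A,B,C}: ad e_7 = A, ad e_1 = B, ad e_2 = C on n;
  <e_7,e_1,e_2> abelian, n abelian.\<close>
definition gABC :: "(nat \<Rightarrow> nat \<Rightarrow> real) \<Rightarrow> (nat \<Rightarrow> nat \<Rightarrow> real) \<Rightarrow> (nat \<Rightarrow> nat \<Rightarrow> real)
    \<Rightarrow> nat \<Rightarrow> nat \<Rightarrow> nat \<Rightarrow> real" where
  "gABC A B C i j m = adm A 7 i j m + adm B 1 i j m + adm C 2 i j m"

definition phi :: form where
  "phi = basic {1,2,7} + basic {3,4,7} + basic {5,6,7} + basic {1,3,5}
         - basic {1,4,6} - basic {2,3,6} - basic {2,4,5}"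

definition psi :: form where
  "psi = hodge phi"

text \<open>G2-irreducible components (Bryant): Lambda^2_14 = {beta : beta wedge psi = 0},
  Lambda^3_27 = {gamma : gamma wedge phi = 0, gamma wedge psi = 0}.\<close>
definition Lambda2_14 :: "form set" where
  "Lambda2_14 = {\<beta>. deg_form 2 \<beta> \<and> wedge \<beta> psi = 0}"

definition Lambda3_27 :: "form set" where
  "Lambda3_27 = {\<gamma>. deg_form 3 \<gamma> \<and> wedge \<gamma> phi = 0 \<and> wedge \<gamma> psi = 0}"

definition is_torsion :: "(nat \<Rightarrow> nat \<Rightarrow> nat \<Rightarrow> real) \<Rightarrow> real \<Rightarrow> form \<Rightarrow> form \<Rightarrow> form \<Rightarrow> bool" where
  "is_torsion c t0 t1 t2 t3 \<longleftrightarrow>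
     deg_form 1 t1 \<and> t2 \<in> Lambda2_14 \<and> t3 \<in> Lambda3_27 \<and>
     dform c phi = scal t0 psi + scal 3 (wedge t1 phi) + hodge t3 \<and>
     dform c psi = scal 4 (wedge t1 psi) + wedge t2 phi"

definition diag4 :: "(nat \<Rightarrow> nat \<Rightarrow> real) \<Rightarrow> bool" where
  "diag4 X \<longleftrightarrow> (\<forall>p\<in>{1..4}. \<forall>q\<in>{1..4}. p \<noteq> q \<longrightarrow> X p q = 0)"

definition sl4 :: "(nat \<Rightarrow> nat \<Rightarrow> real) \<Rightarrow> bool" where
  "sl4 X \<longleftrightarrow> (\<Sum>p\<in>{1..4}. X p p) = 0"

end

theory Submission
  imports Defs
begin


lemma set_insert_eq_iff: "(insert a A = B) = (a \<in> B \<and> A - {a} = B - {a})"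
  by auto
lemma set_empty_eq_iff: "({} = B) = (B = {})" by auto

lemma sum_Pow_insert:
  assumes "a \<notin> A" "finite A"
  shows "sum f (Pow (insert a A)) = sum f (Pow A) + sum (\<lambda>I. f (insert a I)) (Pow A)"
proof -
  have "Pow (insert a A) = Pow A \<union> insert a ` Pow A" by (rule Pow_insert)
  moreover have "Pow A \<inter> insert a ` Pow A = {}" using assms by auto
  moreover have "inj_on (insert a) (Pow A)" by (rule inj_onI) (meson PowD insert_ident subsetD assms(1))
  ultimately show ?thesis using assms
    by (simp add: sum.union_disjoint sum.reindex)
qed

lemma sgn_pair_empty: "sgn_pair {} J = 1" by (simp add: sgn_pair_def)

lemma sgn_pair_insert:
  assumes "a \<notin> A" "finite A" "finite J"
  shows "sgn_pair (insert a A) J = (-1) ^ card {j\<in>J. j < a} * sgn_pair A J"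
proof -
  have "{(i, j). i \<in> insert a A \<and> j \<in> J \<and> j < i} =
        (\<lambda>j. (a,j)) ` {j\<in>J. j < a} \<union> {(i, j). i \<in> A \<and> j \<in> J \<and> j < i}" by auto
  moreover have "finite {(i, j). i \<in> A \<and> j \<in> J \<and> j < i}"
    by (rule finite_subset[of _ "A \<times> J"]) (use assms in auto)
  moreover have "card ((\<lambda>j. (a,j)) ` {j\<in>J. j < a}) = card {j\<in>J. j < a}"
    by (rule card_image) (auto simp: inj_on_def)
  moreover have "(\<lambda>j. (a,j)) ` {j\<in>J. j < a} \<inter> {(i, j). i \<in> A \<and> j \<in> J \<and> j < i} = {}"
    using assms by auto
  ultimately show ?thesis using assms unfolding sgn_pair_def
    by (simp add: card_Un_disjoint power_add)
qed

lemma filter_insert_set: "{j \<in> insert b B. P j} = (if P b then insert b {j\<in>B. P j} else {j\<in>B. P j})"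
  by auto
lemma filter_empty_set: "{j \<in> {}. P j} = {}" by auto


definition sg1 :: "nat \<Rightarrow> nat set \<Rightarrow> real" where
  "sg1 a J = (-1) ^ card {j\<in>J. j < a}"

lemma sg1_empty: "sg1 a {} = 1" by (simp add: sg1_def)
lemma sg1_insert: "b \<notin> B \<Longrightarrow> finite B \<Longrightarrow> sg1 a (insert b B) = (if b < a then - sg1 a B else sg1 a B)"
proof -
  assume h: "b \<notin> B" "finite B"
  have "{j\<in>insert b B. j<a} = (if b<a then insert b {j\<in>B. j<a} else {j\<in>B. j<a})" by auto
  thus ?thesis using h by (simp add: sg1_def)
qed

lemma sgn_pair_insert': "a \<notin> A \<Longrightarrow> finite A \<Longrightarrow> finite J \<Longrightarrow> sgn_pair (insert a A) J = sg1 a J * sgn_pair A J"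
  unfolding sg1_def by (rule sgn_pair_insert)

lemma sum_Pow_empty: "sum f (Pow {}) = f {}" by simp

lemmas evsimps = set_insert_eq_iff set_empty_eq_iff sum_Pow_insert sum_Pow_empty sgn_pair_empty sgn_pair_insert'
  sg1_empty sg1_insert insert_iff empty_iff simp_thms rel_simps arith_simps more_arith_simps if_True if_False
  insert_Diff_if empty_Diff finite_insert finite.emptyI insert_subset empty_subsetI atLeastAtMost_iff
  insert_not_empty empty_not_insert plus_fun_apply minus_apply uminus_apply basic_def


lemma sorted_insert: "finite A \<Longrightarrow> a \<notin> A \<Longrightarrow> \<forall>x\<in>A. a < x \<Longrightarrow>
  sorted_list_of_set (insert a A) = a # sorted_list_of_set A"
proof -
  assume h: "finite A" "a \<notin> A" "\<forall>x\<in>A. a < x"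
  have s: "set (sorted_list_of_set A) = A" using h(1) by simp
  show ?thesis
  proof (cases "sorted_list_of_set A")
    case Nil thus ?thesis using h by (simp add: sorted_list_of_set_insert)
  next
    case (Cons y ys)
    hence "y \<in> A" using s by auto
    hence "a \<le> y" using h(3) by force
    thus ?thesis using h Cons by (simp add: sorted_list_of_set_insert)
  qed
qed

lemma insert_swap: "b < a \<Longrightarrow> insert a (insert b B) = insert b (insert a B)" by auto

lemma ev_ins_sg: "ev_ins \<omega> m R = (if m \<in> R then 0 else sg1 m R * \<omega> (insert m R))"
  by (simp add: ev_ins_def sg1_def)

lemma atLeastAtMost17: "{1..7::nat} = {1,2,3,4,5,6,7}" by auto
lemma atLeastAtMost36: "{3..6::nat} = {3,4,5,6}" by auto

lemmas dsimps = dform_def Let_def sorted_insert ball_simps sorted_list_of_set_empty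
  length_Cons list.size(3) sum.lessThan_Suc lessThan_0 sum.empty nth_Cons_0 nth_Cons_Suc
  Suc_less_eq zero_less_Suc not_less0 power_Suc power_0 add_Suc add_0 add_Suc_right
  ev_ins_sg insert_swap atLeastAtMost17 sum.insert


lemma Ball_Pow_insert: "a \<notin> A \<Longrightarrow> (\<forall>I\<in>Pow (insert a A). P I) = ((\<forall>I\<in>Pow A. P I) \<and> (\<forall>I\<in>Pow A. P (insert a I)))"
  by (auto simp: Pow_insert)
lemma Ball_Pow_empty: "(\<forall>I\<in>Pow {}. P I) = P {}" by simp

lemma diff2: "(3::nat) - 2 = 1" "(4::nat) - 2 = 2" "(5::nat) - 2 = 3" "(6::nat) - 2 = 4" by simp_all

lemma subset17: "K \<subseteq> {1..7::nat} \<Longrightarrow> K \<in> Pow {1,2,3,4,5,6,7}" by auto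

lemma scal_apply: "scal a w K = a * w K" by (simp add: scal_def)
lemma hodge_apply: "hodge w J = (if J \<subseteq> {1..7} then sgn_pair ({1,2,3,4,5,6,7} - J) J * w ({1,2,3,4,5,6,7} - J) else 0)"
  by (simp only: hodge_def atLeastAtMost17)

lemma deg_formD: "deg_form k \<omega> \<Longrightarrow> \<omega> I \<noteq> 0 \<Longrightarrow> I \<subseteq> {1..7} \<and> card I = k"
  unfolding deg_form_def by blast

lemma deg_zero: "deg_form k \<omega> \<Longrightarrow> \<not> (I \<subseteq> {1..7} \<and> card I = k) \<Longrightarrow> \<omega> I = 0"
  unfolding deg_form_def by blast

lemma deg_form_eqI:
  assumes "deg_form k f" "deg_form k g" "\<And>I. I \<subseteq> {1..7} \<Longrightarrow> card I = k \<Longrightarrow> f I = g I"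
  shows "f = g"
proof (rule ext)
  fix I show "f I = g I"
    using assms deg_zero[OF assms(1), of I] deg_zero[OF assms(2), of I] by metis
qed

lemma deg_hodge:
  assumes "deg_form k \<omega>" "k \<le> 7"
  shows "deg_form (7 - k) (hodge \<omega>)"
  unfolding deg_form_def
proof (intro allI impI)
  fix J assume h: "hodge \<omega> J \<noteq> 0"
  hence J: "J \<subseteq> {1..7}" and w: "\<omega> ({1..7} - J) \<noteq> 0" by (auto simp: hodge_def split: if_splits)
  have "card ({1..7} - J) = k" using deg_formD[OF assms(1) w] by blast
  moreover have "card ({1..7::nat} - J) = 7 - card J" using J by (simp add: card_Diff_subset finite_subset)
  ultimately have "card J = 7 - k" using J card_mono[of "{1..7::nat}" J] by simp
  thus "J \<subseteq> {1..7} \<and> card J = 7 - k" using J by blast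
qed

lemma deg_wedge:
  assumes "deg_form k \<alpha>" "deg_form l \<beta>"
  shows "deg_form (k + l) (wedge \<alpha> \<beta>)"
  unfolding deg_form_def
proof (intro allI impI)
  fix K assume h: "wedge \<alpha> \<beta> K \<noteq> 0"
  hence K: "K \<subseteq> {1..7}" by (auto simp: wedge_def split: if_splits)
  hence "(\<Sum>I\<in>Pow K. sgn_pair I (K - I) * \<alpha> I * \<beta> (K - I)) \<noteq> 0" using h by (simp add: wedge_def)
  then obtain I where I: "I \<in> Pow K" "sgn_pair I (K - I) * \<alpha> I * \<beta> (K - I) \<noteq> 0"
    by (rule sum.not_neutral_contains_not_neutral)
  hence "\<alpha> I \<noteq> 0" "\<beta> (K - I) \<noteq> 0" by auto
  hence "card I = k" "card (K - I) = l" using deg_formD assms by blast+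
  moreover have "finite K" using K finite_subset by blast
  moreover have "card (K - I) = card K - card I" using I(1) \<open>finite K\<close> by (simp add: card_Diff_subset finite_subset)
  moreover have "card I \<le> card K" using I(1) \<open>finite K\<close> by (simp add: card_mono)
  ultimately have "card K = k + l" by linarith
  thus "K \<subseteq> {1..7} \<and> card K = k + l" using K by blast
qed

lemma deg_dform:
  assumes "deg_form k \<omega>"
  shows "deg_form (Suc k) (dform c \<omega>)"
  unfolding deg_form_def
proof (intro allI impI)
  fix K assume h: "dform c \<omega> K \<noteq> 0"
  hence K: "K \<subseteq> {1..7}" by (auto simp: dform_def split: if_splits)
  hence fK: "finite K" using finite_subset by blast
  define xs where "xs = sorted_list_of_set K"
  have "(\<Sum>a<length xs. \<Sum>b<length xs. if a < b then
         (-1) ^ (a + b) * (\<Sum>m\<in>{1..7}. c (xs ! a) (xs ! b) m *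
              ev_ins \<omega> m (K - {xs ! a, xs ! b}))
       else 0) \<noteq> 0" using h K unfolding dform_def Let_def xs_def by simp
  then obtain a where a0: "a \<in> {..<length xs}" and s1: "(\<Sum>b<length xs. if a < b then
         (-1) ^ (a + b) * (\<Sum>m\<in>{1..7}. c (xs ! a) (xs ! b) m *
              ev_ins \<omega> m (K - {xs ! a, xs ! b}))
       else 0) \<noteq> 0" by (rule sum.not_neutral_contains_not_neutral)
  from s1 obtain b where b0: "b \<in> {..<length xs}" and s2: "(if a < b then
         (-1) ^ (a + b) * (\<Sum>m\<in>{1..7}. c (xs ! a) (xs ! b) m *
              ev_ins \<omega> m (K - {xs ! a, xs ! b}))
       else 0) \<noteq> 0" by (rule sum.not_neutral_contains_not_neutral)
  have a: "a < length xs" "b < length xs" using a0 b0 by auto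
  from s2 have ab: "a < b" and s3: "(\<Sum>m\<in>{1..7}. c (xs ! a) (xs ! b) m *
              ev_ins \<omega> m (K - {xs ! a, xs ! b})) \<noteq> 0" by (auto split: if_splits)
  from s3 obtain m where "m \<in> {1..7}" "c (xs ! a) (xs ! b) m * ev_ins \<omega> m (K - {xs ! a, xs ! b}) \<noteq> 0"
    by (rule sum.not_neutral_contains_not_neutral)
  hence "ev_ins \<omega> m (K - {xs ! a, xs ! b}) \<noteq> 0" by auto
  then have m: "m \<notin> K - {xs ! a, xs ! b}" and w: "\<omega> (insert m (K - {xs ! a, xs ! b})) \<noteq> 0"
    by (auto simp: ev_ins_def split: if_splits)
  have "card (insert m (K - {xs ! a, xs ! b})) = k" using deg_formD[OF assms w] by blast
  hence c1: "card (K - {xs ! a, xs ! b}) + 1 = k" using m fK by simp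
  have dist: "distinct xs" and setxs: "set xs = K" using fK by (auto simp: xs_def)
  have ne: "xs ! a \<noteq> xs ! b" using a ab dist by (simp add: nth_eq_iff_index_eq)
  have inK: "xs ! a \<in> K" "xs ! b \<in> K" using a setxs nth_mem by blast+
  have "card (K - {xs ! a, xs ! b}) = card K - 2"
    using inK ne fK by (simp add: card_Diff_subset)
  moreover have "card K \<ge> 2" using inK ne fK
  proof -
    have "card {xs ! a, xs ! b} = 2" using ne by simp
    moreover have "{xs ! a, xs ! b} \<subseteq> K" using inK by blast
    ultimately show ?thesis using fK card_mono by metis
  qed
  ultimately have "card K = Suc k" using c1 by simp
  thus "K \<subseteq> {1..7} \<and> card K = Suc k" using K by blast
qed

lemma deg_scal: "deg_form k \<omega> \<Longrightarrow> deg_form k (scal a \<omega>)"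
  unfolding deg_form_def scal_def by simp
lemma deg_plus: "deg_form k \<omega> \<Longrightarrow> deg_form k \<eta> \<Longrightarrow> deg_form k (\<omega> + \<eta>)"
  unfolding deg_form_def by (metis add.right_neutral plus_fun_apply)
lemma deg_uminus: "deg_form k \<omega> \<Longrightarrow> deg_form k (- \<omega>)"
  unfolding deg_form_def by simp
lemma deg_zero_form: "deg_form k (\<lambda>_. 0)"
  unfolding deg_form_def by simp

lemma phi_supp: "phi I \<noteq> 0 \<Longrightarrow> I \<in> {{1,2,7},{3,4,7},{5,6,7},{1,3,5},{1,4,6},{2,3,6},{2,4,5}}"
  unfolding phi_def basic_def by (auto split: if_splits)
lemma deg_phi: "deg_form 3 phi"
  unfolding deg_form_def
proof (intro allI impI)
  fix I assume "phi I \<noteq> 0"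
  from phi_supp[OF this] show "I \<subseteq> {1..7} \<and> card I = 3" by auto
qed

lemma deg_psi: "deg_form 4 psi"
  unfolding psi_def using deg_hodge[OF deg_phi] by simp


lemma card_insert_if': "finite A \<Longrightarrow> card (insert a A) = (if a \<in> A then card A else card A + 1)"
  by (simp add: card_insert_if)

lemmas enumsimps = Ball_Pow_insert Ball_Pow_empty insert_iff empty_iff simp_thms rel_simps arith_simps
  card_insert_if' card.empty one_add_one numeral_plus_one finite_insert finite.emptyI if_True if_False
lemma enum1: fixes P :: "nat set \<Rightarrow> bool" assumes "K \<subseteq> {1..7}" "card K = 1" "P {1}" "P {2}" "P {3}" "P {4}" "P {5}" "P {6}" "P {7}"
  shows "P K"
proof -
  have "\<forall>K\<in>Pow {1,2,3,4,5,6,7}. card K = 1 \<longrightarrow> P K" using assms(3-9) by (simp only: enumsimps)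
  thus ?thesis using subset17 assms(1,2) by blast
qed
lemma enum2: fixes P :: "nat set \<Rightarrow> bool" assumes "K \<subseteq> {1..7}" "card K = 2" "P {1, 2}" "P {1, 3}" "P {1, 4}" "P {1, 5}" "P {1, 6}" "P {1, 7}" "P {2, 3}" "P {2, 4}" "P {2, 5}" "P {2, 6}" "P {2, 7}" "P {3, 4}" "P {3, 5}" "P {3, 6}" "P {3, 7}" "P {4, 5}" "P {4, 6}" "P {4, 7}" "P {5, 6}" "P {5, 7}" "P {6, 7}"
  shows "P K"
proof -
  have "\<forall>K\<in>Pow {1,2,3,4,5,6,7}. card K = 2 \<longrightarrow> P K" using assms(3-23) by (simp only: enumsimps)
  thus ?thesis using subset17 assms(1,2) by blast
qed
lemma enum3: fixes P :: "nat set \<Rightarrow> bool" assumes "K \<subseteq> {1..7}" "card K = 3" "P {1, 2, 3}" "P {1, 2, 4}" "P {1, 2, 5}" "P {1, 2, 6}" "P {1, 2, 7}" "P {1, 3, 4}" "P {1, 3, 5}" "P {1, 3, 6}" "P {1, 3, 7}" "P {1, 4, 5}" "P {1, 4, 6}" "P {1, 4, 7}" "P {1, 5, 6}" "P {1, 5, 7}" "P {1, 6, 7}" "P {2, 3, 4}" "P {2, 3, 5}" "P {2, 3, 6}" "P {2, 3, 7}" "P {2, 4, 5}" "P {2, 4, 6}" "P {2, 4, 7}" "P {2, 5, 6}" "P {2, 5, 7}" "P {2, 6, 7}" "P {3, 4, 5}" "P {3, 4, 6}" "P {3, 4, 7}" "P {3, 5, 6}" "P {3, 5, 7}" "P {3,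 6, 7}" "P {4, 5, 6}" "P {4, 5, 7}" "P {4, 6, 7}" "P {5, 6, 7}"
  shows "P K"
proof -
  have "\<forall>K\<in>Pow {1,2,3,4,5,6,7}. card K = 3 \<longrightarrow> P K" using assms(3-37) by (simp only: enumsimps)
  thus ?thesis using subset17 assms(1,2) by blast
qed
lemma enum4: fixes P :: "nat set \<Rightarrow> bool" assumes "K \<subseteq> {1..7}" "card K = 4" "P {1, 2, 3, 4}" "P {1, 2, 3, 5}" "P {1, 2, 3, 6}" "P {1, 2, 3, 7}" "P {1, 2, 4, 5}" "P {1, 2, 4, 6}" "P {1, 2, 4, 7}" "P {1, 2, 5, 6}" "P {1, 2, 5, 7}" "P {1, 2, 6, 7}" "P {1, 3, 4, 5}" "P {1, 3, 4, 6}" "P {1, 3, 4, 7}" "P {1, 3, 5, 6}" "P {1, 3, 5, 7}" "P {1, 3, 6, 7}" "P {1, 4, 5, 6}" "P {1, 4, 5, 7}" "P {1, 4, 6, 7}" "P {1, 5, 6, 7}" "P {2, 3, 4, 5}" "P {2, 3, 4, 6}" "P {2, 3, 4, 7}" "P {2, 3, 5, 6}" "P {2, 3, 5, 7}" "P {2, 3, 6, 7}" "P {2, 4, 5, 6}" "P {2, 4, 5, 7}" "P {2, 4, 6, 7}" "P {2, 5, 6, 7}" "P {3, 4, 5, 6}" "P {3, 4, 5, 7}" "P {3, 4, 6, 7}" "P {3, 5, 6, 7}" "P {4, 5, 6, 7}"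
  shows "P K"
proof -
  have "\<forall>K\<in>Pow {1,2,3,4,5,6,7}. card K = 4 \<longrightarrow> P K" using assms(3-37) by (simp only: enumsimps)
  thus ?thesis using subset17 assms(1,2) by blast
qed
lemma enum5: fixes P :: "nat set \<Rightarrow> bool" assumes "K \<subseteq> {1..7}" "card K = 5" "P {1, 2, 3, 4, 5}" "P {1, 2, 3, 4, 6}" "P {1, 2, 3, 4, 7}" "P {1, 2, 3, 5, 6}" "P {1, 2, 3, 5, 7}" "P {1, 2, 3, 6, 7}" "P {1, 2, 4, 5, 6}" "P {1, 2, 4, 5, 7}" "P {1, 2, 4, 6, 7}" "P {1, 2, 5, 6, 7}" "P {1, 3, 4, 5, 6}" "P {1, 3, 4, 5, 7}" "P {1, 3, 4, 6, 7}" "P {1, 3, 5, 6, 7}" "P {1, 4, 5, 6, 7}" "P {2, 3, 4, 5, 6}" "P {2, 3, 4, 5, 7}" "P {2, 3, 4, 6, 7}" "P {2, 3, 5, 6, 7}" "P {2, 4, 5, 6, 7}" "P {3, 4, 5, 6, 7}"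
  shows "P K"
proof -
  have "\<forall>K\<in>Pow {1,2,3,4,5,6,7}. card K = 5 \<longrightarrow> P K" using assms(3-23) by (simp only: enumsimps)
  thus ?thesis using subset17 assms(1,2) by blast
qed
lemma enum6: fixes P :: "nat set \<Rightarrow> bool" assumes "K \<subseteq> {1..7}" "card K = 6" "P {1, 2, 3, 4, 5, 6}" "P {1, 2, 3, 4, 5, 7}" "P {1, 2, 3, 4, 6, 7}" "P {1, 2, 3, 5, 6, 7}" "P {1, 2, 4, 5, 6, 7}" "P {1, 3, 4, 5, 6, 7}" "P {2, 3, 4, 5, 6, 7}"
  shows "P K"
proof -
  have "\<forall>K\<in>Pow {1,2,3,4,5,6,7}. card K = 6 \<longrightarrow> P K" using assms(3-9) by (simp only: enumsimps)
  thus ?thesis using subset17 assms(1,2) by blast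
qed
lemma enum7: fixes P :: "nat set \<Rightarrow> bool" assumes "K \<subseteq> {1..7}" "card K = 7" "P {1, 2, 3, 4, 5, 6, 7}"
  shows "P K"
proof -
  have "\<forall>K\<in>Pow {1,2,3,4,5,6,7}. card K = 7 \<longrightarrow> P K" using assms(3-3) by (simp only: enumsimps)
  thus ?thesis using subset17 assms(1,2) by blast
qed




lemma diag4_vals: assumes "diag4 X" shows "X 1 2 = 0" "X 1 3 = 0" "X 1 4 = 0" "X 2 1 = 0" "X 2 3 = 0" "X 2 4 = 0" "X 3 1 = 0" "X 3 2 = 0" "X 3 4 = 0" "X 4 1 = 0" "X 4 2 = 0" "X 4 3 = 0"
  using assms unfolding diag4_def by auto
lemma sl4_val: assumes "sl4 X" shows "X 1 1 + X 2 2 + X 3 3 + X 4 4 = 0"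
  proof -
  have "{1..4::nat} = {1,2,3,4}" by auto
  thus ?thesis using assms unfolding sl4_def by simp
qed

lemma deg_basic: "S \<subseteq> {1..7} \<Longrightarrow> card S = k \<Longrightarrow> deg_form k (basic S)"
  unfolding deg_form_def basic_def by auto
lemma deg_zero_fun: "deg_form k 0"
  unfolding deg_form_def by simp

definition EP :: form where "EP = scal (1) (basic {1, 2, 3, 4}) + scal (1) (basic {1, 2, 5, 6}) + scal (1) (basic {1, 3, 6, 7}) + scal (1) (basic {1, 4, 5, 7}) + scal (1) (basic {2, 3, 5, 7}) + scal (- 1) (basic {2, 4, 6, 7}) + scal (1) (basic {3, 4, 5, 6})"
lemma degEP: "deg_form 4 EP"
  unfolding EP_def by (intro deg_plus deg_scal deg_basic) (simp_all only: enumsimps insert_subset empty_subsetI atLeastAtMost_iff)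

lemmas evalsimps = evsimps dsimps scal_apply hodge_apply zero_fun_apply diff2 atLeastAtMost36 gABC_def adm_def

lemma psi_eq: "psi = EP"
proof (rule deg_form_eqI[OF deg_psi degEP])
  fix I :: "nat set" assume "I \<subseteq> {1..7}" "card I = 4"
  thus "psi I = EP I"
    apply (rule enum4[where P="\<lambda>I. psi I = EP I"])
    unfolding psi_def phi_def EP_def
    by (simp_all only: evalsimps)
qed

context
  fixes A B C :: "nat \<Rightarrow> nat \<Rightarrow> real"
  assumes dA: "diag4 A" and dB: "diag4 B" and dC: "diag4 C"
    and sA: "sl4 A" and sB: "sl4 B" and sC: "sl4 C"
begin
lemmas dvals = diag4_vals[OF dA] diag4_vals[OF dB] diag4_vals[OF dC]

definition E1 :: form where "E1 = scal ((C 1 1) + (C 3 3)) (basic {1, 2, 3, 5}) + scal ((B 1 1) + (B 4 4)) (basic {1, 2, 3, 6}) + scal ((B 2 2) + (B 3 3)) (basic {1, 2, 4, 5}) + scal (- (C 2 2) - (C 4 4)) (basic {1, 2, 4, 6}) + scal (- (B 1 1) - (B 2 2)) (basic {1, 3, 4, 7}) + scal ((A 1 1) + (A 3 3)) (basic {1, 3, 5, 7}) + scal (- (A 2 2) - (A 4 4)) (basic {1, 4, 6, 7}) + scal (- (B 3 3) - (B 4 4)) (basic {1, 5, 6, 7}) + scal (- (C 1 1) - (C 2 2)) (basic {2, 3, 4, 7}) + scal (- (A 1 1) - (A 4 4)) (basic {2, 3, 6, 7}) + scal (- (A 2 2) - (A 3 3)) (basic {2, 4, 5, 7}) + scal (-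 (C 3 3) - (C 4 4)) (basic {2, 5, 6, 7})"
definition E2 :: form where "E2 = scal (- (A 1 1) - (A 2 2)) (basic {1, 2, 3, 4, 7}) + scal (- (B 1 1) - (B 3 3)) (basic {1, 2, 3, 5, 7}) + scal ((C 1 1) + (C 4 4)) (basic {1, 2, 3, 6, 7}) + scal ((C 2 2) + (C 3 3)) (basic {1, 2, 4, 5, 7}) + scal ((B 2 2) + (B 4 4)) (basic {1, 2, 4, 6, 7}) + scal (- (A 3 3) - (A 4 4)) (basic {1, 2, 5, 6, 7}) + scal (- (B 1 1) - (B 2 2) - (B 3 3) - (B 4 4)) (basic {1, 3, 4, 5, 6}) + scal (- (C 1 1) - (C 2 2) - (C 3 3) - (C 4 4)) (basic {2, 3, 4, 5, 6}) + scal (- (A 1 1) - (A 2 2) - (A 3 3) - (A 4 4)) (basic {3, 4, 5, 6, 7})"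

lemma degE1: "deg_form 4 E1"
  unfolding E1_def by (intro deg_plus deg_scal deg_basic) (simp_all only: enumsimps insert_subset empty_subsetI atLeastAtMost_iff)
lemma degE2: "deg_form 5 E2"
  unfolding E2_def by (intro deg_plus deg_scal deg_basic) (simp_all only: enumsimps insert_subset empty_subsetI atLeastAtMost_iff)

lemma degD1: "deg_form 4 (dform c phi)"
  using deg_dform[OF deg_phi, of c] by (simp add: eval_nat_numeral)
lemma degD2: "deg_form 5 (dform c psi)"
  using deg_dform[OF deg_psi, of c] by (simp add: eval_nat_numeral)

lemma D1: "dform (gABC A B C) phi = E1"
proof (rule deg_form_eqI[OF degD1 degE1])
  fix I :: "nat set" assume "I \<subseteq> {1..7}" "card I = 4"
  thus "dform (gABC A B C) phi I = E1 I"
    apply (rule enum4[where P="\<lambda>I. dform (gABC A B C) phi I = E1 I"])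
    unfolding phi_def E1_def
    by (simp_all only: evalsimps dvals)
qed

lemma D2: "dform (gABC A B C) psi = E2"
proof (rule deg_form_eqI[OF degD2 degE2])
  fix I :: "nat set" assume "I \<subseteq> {1..7}" "card I = 5"
  thus "dform (gABC A B C) psi I = E2 I"
    apply (rule enum5[where P="\<lambda>I. dform (gABC A B C) psi I = E2 I"])
    unfolding psi_eq EP_def E2_def
    by (simp_all only: evalsimps dvals)
qed

lemmas sls = sl4_val[OF sA] sl4_val[OF sB] sl4_val[OF sC]
lemmas E1eq = D1
lemmas E2eq = D2

lemma F3: "wedge (- hodge E2) psi = 0"
proof -
  have dW: "deg_form 6 (wedge (- hodge E2) psi)" using deg_wedge[OF deg_uminus[OF deg_hodge[OF degE2]] deg_psi] by simp
  show ?thesis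
  proof (rule deg_form_eqI[OF dW deg_zero_fun])
    fix I :: "nat set" assume "I \<subseteq> {1..7}" "card I = 6"
    thus "wedge (- hodge E2) psi I = 0 I"
      apply (rule enum6[where P="\<lambda>I. wedge (- hodge E2) psi I = 0 I"])
      unfolding psi_eq EP_def E2_def
      by (simp only: evalsimps wedge_def; (insert sls, linarith)?)+
  qed
qed

lemma F5: "wedge (hodge E1) phi = 0"
proof -
  have dW: "deg_form 6 (wedge (hodge E1) phi)" using deg_wedge[OF deg_hodge[OF degE1] deg_phi] by simp
  show ?thesis
  proof (rule deg_form_eqI[OF dW deg_zero_fun])
    fix I :: "nat set" assume "I \<subseteq> {1..7}" "card I = 6"
    thus "wedge (hodge E1) phi I = 0 I"
      apply (rule enum6[where P="\<lambda>I. wedge (hodge E1) phi I = 0 I"])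
      unfolding phi_def E1_def
      by (simp only: evalsimps wedge_def; (insert sls, linarith)?)+
  qed
qed

lemma F6: "wedge (hodge E1) psi = 0"
proof -
  have dW: "deg_form 7 (wedge (hodge E1) psi)" using deg_wedge[OF deg_hodge[OF degE1] deg_psi] by simp
  show ?thesis
  proof (rule deg_form_eqI[OF dW deg_zero_fun])
    fix I :: "nat set" assume "I \<subseteq> {1..7}" "card I = 7"
    thus "wedge (hodge E1) psi I = 0 I"
      apply (rule enum7[where P="\<lambda>I. wedge (hodge E1) psi I = 0 I"])
      unfolding psi_eq EP_def E1_def
      by (simp only: evalsimps wedge_def; (insert sls, linarith)?)+
  qed
qed

lemma F7: "E1 = scal 0 psi + scal 3 (wedge (\<lambda>_. 0) phi) + hodge (hodge E1)"
proof -
  have dW: "deg_form 4 (scal 0 psi + scal 3 (wedge (\<lambda>_. 0) phi) + hodge (hodge E1))"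
  proof -
    have a: "deg_form 4 (wedge (\<lambda>_. 0) phi)" using deg_wedge[OF deg_zero_form[of 1] deg_phi] by simp
    have b: "deg_form 4 (hodge (hodge E1))" using deg_hodge[OF deg_hodge[OF degE1]] by simp
    show ?thesis by (rule deg_plus[OF deg_plus[OF deg_scal[OF deg_psi] deg_scal[OF a]] b])
  qed
  show ?thesis
  proof (rule deg_form_eqI[OF degE1 dW])
    fix I :: "nat set" assume "I \<subseteq> {1..7}" "card I = 4"
    thus "E1 I = (scal 0 psi + scal 3 (wedge (\<lambda>_. 0) phi) + hodge (hodge E1)) I"
      apply (rule enum4[where P="\<lambda>I. E1 I = (scal 0 psi + scal 3 (wedge (\<lambda>_. 0) phi) + hodge (hodge E1)) I"])
      unfolding psi_eq EP_def E1_def phi_def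
      by (simp only: evalsimps wedge_def; (insert sls, linarith)?)+
  qed
qed

lemma F8: "E2 = scal 4 (wedge (\<lambda>_. 0) psi) + wedge (- hodge E2) phi"
proof -
  have dW: "deg_form 5 (scal 4 (wedge (\<lambda>_. 0) psi) + wedge (- hodge E2) phi)"
  proof -
    have a: "deg_form 5 (wedge (\<lambda>_. 0) psi)" using deg_wedge[OF deg_zero_form[of 1] deg_psi] by simp
    have b: "deg_form 5 (wedge (- hodge E2) phi)" using deg_wedge[OF deg_uminus[OF deg_hodge[OF degE2]] deg_phi] by simp
    show ?thesis by (rule deg_plus[OF deg_scal[OF a] b])
  qed
  show ?thesis
  proof (rule deg_form_eqI[OF degE2 dW])
    fix I :: "nat set" assume "I \<subseteq> {1..7}" "card I = 5"
    thus "E2 I = (scal 4 (wedge (\<lambda>_. 0) psi) + wedge (- hodge E2) phi) I"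
      apply (rule enum5[where P="\<lambda>I. E2 I = (scal 4 (wedge (\<lambda>_. 0) psi) + wedge (- hodge E2) phi) I"])
      unfolding psi_eq EP_def E2_def phi_def
      by (simp only: evalsimps wedge_def; (insert sls, linarith)?)+
  qed
qed

lemma fwd: "is_torsion (gABC A B C) 0 (\<lambda>_. 0) (- hodge E2) (hodge E1)"
proof -
  have "deg_form 2 (- hodge E2)" using deg_uminus[OF deg_hodge[OF degE2]] by simp
  moreover have "deg_form 3 (hodge E1)" using deg_hodge[OF degE1] by simp
  ultimately show ?thesis
    unfolding is_torsion_def Lambda2_14_def Lambda3_27_def E1eq E2eq
    using deg_zero_form F3 F5 F6 F7 F8 by blast
qed

lemma bwd:
  assumes "is_torsion (gABC A B C) t0 t1 t2 t3"
  shows "t0 = 0 \<and> t1 = (\<lambda>_. 0) \<and> t2 = - hodge E2 \<and> t3 = hodge E1"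
proof -
  from assms have dt1: "deg_form 1 t1" and dt2: "deg_form 2 t2" and w1: "wedge t2 psi = 0"
    and dt3: "deg_form 3 t3" and w2: "wedge t3 phi = 0" and w3: "wedge t3 psi = 0"
    and q1: "E1 = scal t0 psi + scal 3 (wedge t1 phi) + hodge t3"
    and q2: "E2 = scal 4 (wedge t1 psi) + wedge t2 phi"
    unfolding is_torsion_def Lambda2_14_def Lambda3_27_def E1eq E2eq by auto
  have eA1234: "0 = (t0 + t3 {5, 6, 7})"
    using fun_cong[OF q1, of "{1, 2, 3, 4}"] unfolding psi_eq EP_def E1_def phi_def
    by (simp only: evalsimps wedge_def; linarith?)
  have eA1235: "((C 1 1) + (C 3 3)) = (- 3 * t1 {2} - t3 {4, 6, 7})"
    using fun_cong[OF q1, of "{1, 2, 3, 5}"] unfolding psi_eq EP_def E1_def phi_def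
    by (simp only: evalsimps wedge_def; linarith?)
  have eA1236: "((B 1 1) + (B 4 4)) = (- 3 * t1 {1} + t3 {4, 5, 7})"
    using fun_cong[OF q1, of "{1, 2, 3, 6}"] unfolding psi_eq EP_def E1_def phi_def
    by (simp only: evalsimps wedge_def; linarith?)
  have eA1237: "0 = (3 * t1 {3} - t3 {4, 5, 6})"
    using fun_cong[OF q1, of "{1, 2, 3, 7}"] unfolding psi_eq EP_def E1_def phi_def
    by (simp only: evalsimps wedge_def; linarith?)
  have eA1245: "((B 2 2) + (B 3 3)) = (- 3 * t1 {1} + t3 {3, 6, 7})"
    using fun_cong[OF q1, of "{1, 2, 4, 5}"] unfolding psi_eq EP_def E1_def phi_def
    by (simp only: evalsimps wedge_def; linarith?)
  have eA1246: "(- (C 2 2) - (C 4 4)) = (3 * t1 {2} - t3 {3, 5, 7})"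
    using fun_cong[OF q1, of "{1, 2, 4, 6}"] unfolding psi_eq EP_def E1_def phi_def
    by (simp only: evalsimps wedge_def; linarith?)
  have eA1247: "0 = (3 * t1 {4} + t3 {3, 5, 6})"
    using fun_cong[OF q1, of "{1, 2, 4, 7}"] unfolding psi_eq EP_def E1_def phi_def
    by (simp only: evalsimps wedge_def; linarith?)
  have eA1256: "0 = (t0 + t3 {3, 4, 7})"
    using fun_cong[OF q1, of "{1, 2, 5, 6}"] unfolding psi_eq EP_def E1_def phi_def
    by (simp only: evalsimps wedge_def; linarith?)
  have eA1257: "0 = (3 * t1 {5} - t3 {3, 4, 6})"
    using fun_cong[OF q1, of "{1, 2, 5, 7}"] unfolding psi_eq EP_def E1_def phi_def
    by (simp only: evalsimps wedge_def; linarith?)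
  have eA1267: "0 = (3 * t1 {6} + t3 {3, 4, 5})"
    using fun_cong[OF q1, of "{1, 2, 6, 7}"] unfolding psi_eq EP_def E1_def phi_def
    by (simp only: evalsimps wedge_def; linarith?)
  have eA1345: "0 = (3 * t1 {4} - t3 {2, 6, 7})"
    using fun_cong[OF q1, of "{1, 3, 4, 5}"] unfolding psi_eq EP_def E1_def phi_def
    by (simp only: evalsimps wedge_def; linarith?)
  have eA1346: "0 = (3 * t1 {3} + t3 {2, 5, 7})"
    using fun_cong[OF q1, of "{1, 3, 4, 6}"] unfolding psi_eq EP_def E1_def phi_def
    by (simp only: evalsimps wedge_def; linarith?)
  have eA1347: "(- (B 1 1) - (B 2 2)) = (3 * t1 {1} - t3 {2, 5, 6})"
    using fun_cong[OF q1, of "{1, 3, 4, 7}"] unfolding psi_eq EP_def E1_def phi_def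
    by (simp only: evalsimps wedge_def; linarith?)
  have eA1356: "0 = (- 3 * t1 {6} - t3 {2, 4, 7})"
    using fun_cong[OF q1, of "{1, 3, 5, 6}"] unfolding psi_eq EP_def E1_def phi_def
    by (simp only: evalsimps wedge_def; linarith?)
  have eA1357: "((A 1 1) + (A 3 3)) = (- 3 * t1 {7} + t3 {2, 4, 6})"
    using fun_cong[OF q1, of "{1, 3, 5, 7}"] unfolding psi_eq EP_def E1_def phi_def
    by (simp only: evalsimps wedge_def; linarith?)
  have eA1367: "0 = (t0 - t3 {2, 4, 5})"
    using fun_cong[OF q1, of "{1, 3, 6, 7}"] unfolding psi_eq EP_def E1_def phi_def
    by (simp only: evalsimps wedge_def; linarith?)
  have eA1456: "0 = (- 3 * t1 {5} + t3 {2, 3, 7})"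
    using fun_cong[OF q1, of "{1, 4, 5, 6}"] unfolding psi_eq EP_def E1_def phi_def
    by (simp only: evalsimps wedge_def; linarith?)
  have eA1457: "0 = (t0 - t3 {2, 3, 6})"
    using fun_cong[OF q1, of "{1, 4, 5, 7}"] unfolding psi_eq EP_def E1_def phi_def
    by (simp only: evalsimps wedge_def; linarith?)
  have eA1467: "(- (A 2 2) - (A 4 4)) = (3 * t1 {7} + t3 {2, 3, 5})"
    using fun_cong[OF q1, of "{1, 4, 6, 7}"] unfolding psi_eq EP_def E1_def phi_def
    by (simp only: evalsimps wedge_def; linarith?)
  have eA1567: "(- (B 3 3) - (B 4 4)) = (3 * t1 {1} - t3 {2, 3, 4})"
    using fun_cong[OF q1, of "{1, 5, 6, 7}"] unfolding psi_eq EP_def E1_def phi_def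
    by (simp only: evalsimps wedge_def; linarith?)
  have eA2345: "0 = (3 * t1 {3} + t3 {1, 6, 7})"
    using fun_cong[OF q1, of "{2, 3, 4, 5}"] unfolding psi_eq EP_def E1_def phi_def
    by (simp only: evalsimps wedge_def; linarith?)
  have eA2346: "0 = (- 3 * t1 {4} - t3 {1, 5, 7})"
    using fun_cong[OF q1, of "{2, 3, 4, 6}"] unfolding psi_eq EP_def E1_def phi_def
    by (simp only: evalsimps wedge_def; linarith?)
  have eA2347: "(- (C 1 1) - (C 2 2)) = (3 * t1 {2} + t3 {1, 5, 6})"
    using fun_cong[OF q1, of "{2, 3, 4, 7}"] unfolding psi_eq EP_def E1_def phi_def
    by (simp only: evalsimps wedge_def; linarith?)
  have eA2356: "0 = (- 3 * t1 {5} + t3 {1, 4, 7})"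
    using fun_cong[OF q1, of "{2, 3, 5, 6}"] unfolding psi_eq EP_def E1_def phi_def
    by (simp only: evalsimps wedge_def; linarith?)
  have eA2357: "0 = (t0 - t3 {1, 4, 6})"
    using fun_cong[OF q1, of "{2, 3, 5, 7}"] unfolding psi_eq EP_def E1_def phi_def
    by (simp only: evalsimps wedge_def; linarith?)
  have eA2367: "(- (A 1 1) - (A 4 4)) = (3 * t1 {7} + t3 {1, 4, 5})"
    using fun_cong[OF q1, of "{2, 3, 6, 7}"] unfolding psi_eq EP_def E1_def phi_def
    by (simp only: evalsimps wedge_def; linarith?)
  have eA2456: "0 = (3 * t1 {6} - t3 {1, 3, 7})"
    using fun_cong[OF q1, of "{2, 4, 5, 6}"] unfolding psi_eq EP_def E1_def phi_def
    by (simp only: evalsimps wedge_def; linarith?)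
  have eA2457: "(- (A 2 2) - (A 3 3)) = (3 * t1 {7} + t3 {1, 3, 6})"
    using fun_cong[OF q1, of "{2, 4, 5, 7}"] unfolding psi_eq EP_def E1_def phi_def
    by (simp only: evalsimps wedge_def; linarith?)
  have eA2467: "0 = (- t0 - t3 {1, 3, 5})"
    using fun_cong[OF q1, of "{2, 4, 6, 7}"] unfolding psi_eq EP_def E1_def phi_def
    by (simp only: evalsimps wedge_def; linarith?)
  have eA2567: "(- (C 3 3) - (C 4 4)) = (3 * t1 {2} + t3 {1, 3, 4})"
    using fun_cong[OF q1, of "{2, 5, 6, 7}"] unfolding psi_eq EP_def E1_def phi_def
    by (simp only: evalsimps wedge_def; linarith?)
  have eA3456: "0 = (t0 + t3 {1, 2, 7})"
    using fun_cong[OF q1, of "{3, 4, 5, 6}"] unfolding psi_eq EP_def E1_def phi_def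
    by (simp only: evalsimps wedge_def; linarith?)
  have eA3457: "0 = (3 * t1 {5} - t3 {1, 2, 6})"
    using fun_cong[OF q1, of "{3, 4, 5, 7}"] unfolding psi_eq EP_def E1_def phi_def
    by (simp only: evalsimps wedge_def; linarith?)
  have eA3467: "0 = (3 * t1 {6} + t3 {1, 2, 5})"
    using fun_cong[OF q1, of "{3, 4, 6, 7}"] unfolding psi_eq EP_def E1_def phi_def
    by (simp only: evalsimps wedge_def; linarith?)
  have eA3567: "0 = (3 * t1 {3} - t3 {1, 2, 4})"
    using fun_cong[OF q1, of "{3, 5, 6, 7}"] unfolding psi_eq EP_def E1_def phi_def
    by (simp only: evalsimps wedge_def; linarith?)
  have eA4567: "0 = (3 * t1 {4} + t3 {1, 2, 3})"
    using fun_cong[OF q1, of "{4, 5, 6, 7}"] unfolding psi_eq EP_def E1_def phi_def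
    by (simp only: evalsimps wedge_def; linarith?)
  have eB12345: "0 = (4 * t1 {5} + t2 {1, 3} - t2 {2, 4})"
    using fun_cong[OF q2, of "{1, 2, 3, 4, 5}"] unfolding psi_eq EP_def E2_def phi_def
    by (simp only: evalsimps wedge_def; linarith?)
  have eB12346: "0 = (4 * t1 {6} - t2 {1, 4} - t2 {2, 3})"
    using fun_cong[OF q2, of "{1, 2, 3, 4, 6}"] unfolding psi_eq EP_def E2_def phi_def
    by (simp only: evalsimps wedge_def; linarith?)
  have eB12347: "(- (A 1 1) - (A 2 2)) = (4 * t1 {7} + t2 {1, 2} + t2 {3, 4})"
    using fun_cong[OF q2, of "{1, 2, 3, 4, 7}"] unfolding psi_eq EP_def E2_def phi_def
    by (simp only: evalsimps wedge_def; linarith?)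
  have eB12356: "0 = (4 * t1 {3} - t2 {1, 5} + t2 {2, 6})"
    using fun_cong[OF q2, of "{1, 2, 3, 5, 6}"] unfolding psi_eq EP_def E2_def phi_def
    by (simp only: evalsimps wedge_def; linarith?)
  have eB12357: "(- (B 1 1) - (B 3 3)) = (4 * t1 {1} + t2 {2, 7} + t2 {3, 5})"
    using fun_cong[OF q2, of "{1, 2, 3, 5, 7}"] unfolding psi_eq EP_def E2_def phi_def
    by (simp only: evalsimps wedge_def; linarith?)
  have eB12367: "((C 1 1) + (C 4 4)) = (- 4 * t1 {2} + t2 {1, 7} + t2 {3, 6})"
    using fun_cong[OF q2, of "{1, 2, 3, 6, 7}"] unfolding psi_eq EP_def E2_def phi_def
    by (simp only: evalsimps wedge_def; linarith?)
  have eB12456: "0 = (4 * t1 {4} + t2 {1, 6} + t2 {2, 5})"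
    using fun_cong[OF q2, of "{1, 2, 4, 5, 6}"] unfolding psi_eq EP_def E2_def phi_def
    by (simp only: evalsimps wedge_def; linarith?)
  have eB12457: "((C 2 2) + (C 3 3)) = (- 4 * t1 {2} + t2 {1, 7} + t2 {4, 5})"
    using fun_cong[OF q2, of "{1, 2, 4, 5, 7}"] unfolding psi_eq EP_def E2_def phi_def
    by (simp only: evalsimps wedge_def; linarith?)
  have eB12467: "((B 2 2) + (B 4 4)) = (- 4 * t1 {1} - t2 {2, 7} + t2 {4, 6})"
    using fun_cong[OF q2, of "{1, 2, 4, 6, 7}"] unfolding psi_eq EP_def E2_def phi_def
    by (simp only: evalsimps wedge_def; linarith?)
  have eB12567: "(- (A 3 3) - (A 4 4)) = (4 * t1 {7} + t2 {1, 2} + t2 {5, 6})"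
    using fun_cong[OF q2, of "{1, 2, 5, 6, 7}"] unfolding psi_eq EP_def E2_def phi_def
    by (simp only: evalsimps wedge_def; linarith?)
  have eB13456: "(- (B 1 1) - (B 2 2) - (B 3 3) - (B 4 4)) = (4 * t1 {1} + t2 {3, 5} - t2 {4, 6})"
    using fun_cong[OF q2, of "{1, 3, 4, 5, 6}"] unfolding psi_eq EP_def E2_def phi_def
    by (simp only: evalsimps wedge_def; linarith?)
  have eB13457: "0 = (- 4 * t1 {3} + t2 {1, 5} - t2 {4, 7})"
    using fun_cong[OF q2, of "{1, 3, 4, 5, 7}"] unfolding psi_eq EP_def E2_def phi_def
    by (simp only: evalsimps wedge_def; linarith?)
  have eB13467: "0 = (4 * t1 {4} + t2 {1, 6} - t2 {3, 7})"
    using fun_cong[OF q2, of "{1, 3, 4, 6, 7}"] unfolding psi_eq EP_def E2_def phi_def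
    by (simp only: evalsimps wedge_def; linarith?)
  have eB13567: "0 = (4 * t1 {5} + t2 {1, 3} + t2 {6, 7})"
    using fun_cong[OF q2, of "{1, 3, 5, 6, 7}"] unfolding psi_eq EP_def E2_def phi_def
    by (simp only: evalsimps wedge_def; linarith?)
  have eB14567: "0 = (- 4 * t1 {6} + t2 {1, 4} + t2 {5, 7})"
    using fun_cong[OF q2, of "{1, 4, 5, 6, 7}"] unfolding psi_eq EP_def E2_def phi_def
    by (simp only: evalsimps wedge_def; linarith?)
  have eB23456: "(- (C 1 1) - (C 2 2) - (C 3 3) - (C 4 4)) = (4 * t1 {2} - t2 {3, 6} - t2 {4, 5})"
    using fun_cong[OF q2, of "{2, 3, 4, 5, 6}"] unfolding psi_eq EP_def E2_def phi_def
    by (simp only: evalsimps wedge_def; linarith?)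
  have eB23457: "0 = (4 * t1 {4} + t2 {2, 5} - t2 {3, 7})"
    using fun_cong[OF q2, of "{2, 3, 4, 5, 7}"] unfolding psi_eq EP_def E2_def phi_def
    by (simp only: evalsimps wedge_def; linarith?)
  have eB23467: "0 = (4 * t1 {3} + t2 {2, 6} + t2 {4, 7})"
    using fun_cong[OF q2, of "{2, 3, 4, 6, 7}"] unfolding psi_eq EP_def E2_def phi_def
    by (simp only: evalsimps wedge_def; linarith?)
  have eB23567: "0 = (- 4 * t1 {6} + t2 {2, 3} + t2 {5, 7})"
    using fun_cong[OF q2, of "{2, 3, 5, 6, 7}"] unfolding psi_eq EP_def E2_def phi_def
    by (simp only: evalsimps wedge_def; linarith?)
  have eB24567: "0 = (- 4 * t1 {5} + t2 {2, 4} - t2 {6, 7})"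
    using fun_cong[OF q2, of "{2, 4, 5, 6, 7}"] unfolding psi_eq EP_def E2_def phi_def
    by (simp only: evalsimps wedge_def; linarith?)
  have eB34567: "(- (A 1 1) - (A 2 2) - (A 3 3) - (A 4 4)) = (4 * t1 {7} + t2 {3, 4} + t2 {5, 6})"
    using fun_cong[OF q2, of "{3, 4, 5, 6, 7}"] unfolding psi_eq EP_def E2_def phi_def
    by (simp only: evalsimps wedge_def; linarith?)
  have eC123456: "(t2 {1, 2} + t2 {3, 4} + t2 {5, 6}) = 0"
    using fun_cong[OF w1, of "{1, 2, 3, 4, 5, 6}"] unfolding psi_eq EP_def
    by (simp only: evalsimps wedge_def; linarith?)
  have eC123457: "(t2 {1, 4} + t2 {2, 3} + t2 {5, 7}) = 0"
    using fun_cong[OF w1, of "{1, 2, 3, 4, 5, 7}"] unfolding psi_eq EP_def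
    by (simp only: evalsimps wedge_def; linarith?)
  have eC123467: "(t2 {1, 3} - t2 {2, 4} + t2 {6, 7}) = 0"
    using fun_cong[OF w1, of "{1, 2, 3, 4, 6, 7}"] unfolding psi_eq EP_def
    by (simp only: evalsimps wedge_def; linarith?)
  have eC123567: "(- t2 {1, 6} - t2 {2, 5} + t2 {3, 7}) = 0"
    using fun_cong[OF w1, of "{1, 2, 3, 5, 6, 7}"] unfolding psi_eq EP_def
    by (simp only: evalsimps wedge_def; linarith?)
  have eC124567: "(- t2 {1, 5} + t2 {2, 6} + t2 {4, 7}) = 0"
    using fun_cong[OF w1, of "{1, 2, 4, 5, 6, 7}"] unfolding psi_eq EP_def
    by (simp only: evalsimps wedge_def; linarith?)
  have eC134567: "(t2 {1, 7} + t2 {3, 6} + t2 {4, 5}) = 0"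
    using fun_cong[OF w1, of "{1, 3, 4, 5, 6, 7}"] unfolding psi_eq EP_def
    by (simp only: evalsimps wedge_def; linarith?)
  have eC234567: "(t2 {2, 7} + t2 {3, 5} - t2 {4, 6}) = 0"
    using fun_cong[OF w1, of "{2, 3, 4, 5, 6, 7}"] unfolding psi_eq EP_def
    by (simp only: evalsimps wedge_def; linarith?)
  have eD123456: "(- t3 {1, 3, 6} - t3 {1, 4, 5} - t3 {2, 3, 5} + t3 {2, 4, 6}) = 0"
    using fun_cong[OF w2, of "{1, 2, 3, 4, 5, 6}"] unfolding phi_def
    by (simp only: evalsimps wedge_def; linarith?)
  have eD123457: "(t3 {1, 2, 5} - t3 {1, 3, 7} + t3 {2, 4, 7} + t3 {3, 4, 5}) = 0"
    using fun_cong[OF w2, of "{1, 2, 3, 4, 5, 7}"] unfolding phi_def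
    by (simp only: evalsimps wedge_def; linarith?)
  have eD123467: "(t3 {1, 2, 6} + t3 {1, 4, 7} + t3 {2, 3, 7} + t3 {3, 4, 6}) = 0"
    using fun_cong[OF w2, of "{1, 2, 3, 4, 6, 7}"] unfolding phi_def
    by (simp only: evalsimps wedge_def; linarith?)
  have eD123567: "(t3 {1, 2, 3} + t3 {1, 5, 7} - t3 {2, 6, 7} + t3 {3, 5, 6}) = 0"
    using fun_cong[OF w2, of "{1, 2, 3, 5, 6, 7}"] unfolding phi_def
    by (simp only: evalsimps wedge_def; linarith?)
  have eD124567: "(t3 {1, 2, 4} - t3 {1, 6, 7} - t3 {2, 5, 7} + t3 {4, 5, 6}) = 0"
    using fun_cong[OF w2, of "{1, 2, 4, 5, 6, 7}"] unfolding phi_def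
    by (simp only: evalsimps wedge_def; linarith?)
  have eD134567: "(t3 {1, 3, 4} + t3 {1, 5, 6} - t3 {3, 5, 7} + t3 {4, 6, 7}) = 0"
    using fun_cong[OF w2, of "{1, 3, 4, 5, 6, 7}"] unfolding phi_def
    by (simp only: evalsimps wedge_def; linarith?)
  have eD234567: "(t3 {2, 3, 4} + t3 {2, 5, 6} + t3 {3, 6, 7} + t3 {4, 5, 7}) = 0"
    using fun_cong[OF w2, of "{2, 3, 4, 5, 6, 7}"] unfolding phi_def
    by (simp only: evalsimps wedge_def; linarith?)
  have eE1234567: "(t3 {1, 2, 7} + t3 {1, 3, 5} - t3 {1, 4, 6} - t3 {2, 3, 6} - t3 {2, 4, 5} + t3 {3, 4, 7} + t3 {5, 6, 7}) = 0"
    using fun_cong[OF w3, of "{1, 2, 3, 4, 5, 6, 7}"] unfolding psi_eq EP_def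
    by (simp only: evalsimps wedge_def; linarith?)
  have s_t0: "t0 = 0" using eA1234 eA1256 eA1367 eA1457 eA2357 eA2467 eA3456 eE1234567 by linarith
  have s_t11: "t1 {1} = (- 1 / 6 * (B 1 1) - 1 / 6 * (B 2 2) - 1 / 6 * (B 3 3) - 1 / 6 * (B 4 4))" using eB12357 eB12467 eB13456 eC234567 by linarith
  have s_t12: "t1 {2} = (- 1 / 6 * (C 1 1) - 1 / 6 * (C 2 2) - 1 / 6 * (C 3 3) - 1 / 6 * (C 4 4))" using eB12367 eB12457 eB23456 eC134567 by linarith
  have s_t13: "t1 {3} = 0" using eB12356 eB13457 eB23467 eC124567 by linarith
  have s_t14: "t1 {4} = 0" using eB12456 eB13467 eB23457 eC123567 by linarith
  have s_t15: "t1 {5} = 0" using eB12345 eB13567 eB24567 eC123467 by linarith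
  have s_t16: "t1 {6} = 0" using eB12346 eB14567 eB23567 eC123457 by linarith
  have s_t17: "t1 {7} = (- 1 / 6 * (A 1 1) - 1 / 6 * (A 2 2) - 1 / 6 * (A 3 3) - 1 / 6 * (A 4 4))" using eB12347 eB12567 eB34567 eC123456 by linarith
  have s_t212: "t2 {1, 2} = (1 / 3 * (A 1 1) + 1 / 3 * (A 2 2) + 1 / 3 * (A 3 3) + 1 / 3 * (A 4 4))" using eB12347 eB12567 eB34567 eC123456 by linarith
  have s_t213: "t2 {1, 3} = 0" using eB12345 eB13567 eB24567 eC123467 by linarith
  have s_t214: "t2 {1, 4} = 0" using eB12346 eB14567 eB23567 eC123457 by linarith
  have s_t215: "t2 {1, 5} = 0" using eB12356 eB13457 eB23467 eC124567 by linarith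
  have s_t216: "t2 {1, 6} = 0" using eB12456 eB13467 eB23457 eC123567 by linarith
  have s_t217: "t2 {1, 7} = (- 1 / 3 * (C 1 1) - 1 / 3 * (C 2 2) - 1 / 3 * (C 3 3) - 1 / 3 * (C 4 4))" using eB12367 eB12457 eB23456 eC134567 by linarith
  have s_t223: "t2 {2, 3} = 0" using eB12346 eB14567 eB23567 eC123457 by linarith
  have s_t224: "t2 {2, 4} = 0" using eB12345 eB13567 eB24567 eC123467 by linarith
  have s_t225: "t2 {2, 5} = 0" using eB12456 eB13467 eB23457 eC123567 by linarith
  have s_t226: "t2 {2, 6} = 0" using eB12356 eB13457 eB23467 eC124567 by linarith
  have s_t227: "t2 {2, 7} = (1 / 3 * (B 1 1) + 1 / 3 * (B 2 2) + 1 / 3 * (B 3 3) + 1 / 3 * (B 4 4))" using eB12357 eB12467 eB13456 eC234567 by linarith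
  have s_t234: "t2 {3, 4} = (- 2 / 3 * (A 1 1) - 2 / 3 * (A 2 2) + 1 / 3 * (A 3 3) + 1 / 3 * (A 4 4))" using eB12347 eB12567 eB34567 eC123456 by linarith
  have s_t235: "t2 {3, 5} = (- 2 / 3 * (B 1 1) + 1 / 3 * (B 2 2) - 2 / 3 * (B 3 3) + 1 / 3 * (B 4 4))" using eB12357 eB12467 eB13456 eC234567 by linarith
  have s_t236: "t2 {3, 6} = (2 / 3 * (C 1 1) - 1 / 3 * (C 2 2) - 1 / 3 * (C 3 3) + 2 / 3 * (C 4 4))" using eB12367 eB12457 eB23456 eC134567 by linarith
  have s_t237: "t2 {3, 7} = 0" using eB12456 eB13467 eB23457 eC123567 by linarith
  have s_t245: "t2 {4, 5} = (- 1 / 3 * (C 1 1) + 2 / 3 * (C 2 2) + 2 / 3 * (C 3 3) - 1 / 3 * (C 4 4))" using eB12367 eB12457 eB23456 eC134567 by linarith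
  have s_t246: "t2 {4, 6} = (- 1 / 3 * (B 1 1) + 2 / 3 * (B 2 2) - 1 / 3 * (B 3 3) + 2 / 3 * (B 4 4))" using eB12357 eB12467 eB13456 eC234567 by linarith
  have s_t247: "t2 {4, 7} = 0" using eB12356 eB13457 eB23467 eC124567 by linarith
  have s_t256: "t2 {5, 6} = (1 / 3 * (A 1 1) + 1 / 3 * (A 2 2) - 2 / 3 * (A 3 3) - 2 / 3 * (A 4 4))" using eB12347 eB12567 eB34567 eC123456 by linarith
  have s_t257: "t2 {5, 7} = 0" using eB12346 eB14567 eB23567 eC123457 by linarith
  have s_t267: "t2 {6, 7} = 0" using eB12345 eB13567 eB24567 eC123467 by linarith
  have s_t3123: "t3 {1, 2, 3} = 0" using eA4567 eB12456 eB13467 eB23457 eC123567 by linarith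
  have s_t3124: "t3 {1, 2, 4} = 0" using eA3567 eB12356 eB13457 eB23467 eC124567 by linarith
  have s_t3125: "t3 {1, 2, 5} = 0" using eA3467 eB12346 eB14567 eB23567 eC123457 by linarith
  have s_t3126: "t3 {1, 2, 6} = 0" using eA3457 eB12345 eB13567 eB24567 eC123467 by linarith
  have s_t3127: "t3 {1, 2, 7} = 0" using eA1234 eA1256 eA1367 eA1457 eA2357 eA2467 eA3456 eE1234567 by linarith
  have s_t3134: "t3 {1, 3, 4} = (1 / 2 * (C 1 1) + 1 / 2 * (C 2 2) - 1 / 2 * (C 3 3) - 1 / 2 * (C 4 4))" using eA2567 eB12367 eB12457 eB23456 eC134567 by linarith
  have s_t3135: "t3 {1, 3, 5} = 0" using eA1234 eA1256 eA1367 eA1457 eA2357 eA2467 eA3456 eE1234567 by linarith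
  have s_t3136: "t3 {1, 3, 6} = (1 / 2 * (A 1 1) - 1 / 2 * (A 2 2) - 1 / 2 * (A 3 3) + 1 / 2 * (A 4 4))" using eA2457 eB12347 eB12567 eB34567 eC123456 by linarith
  have s_t3137: "t3 {1, 3, 7} = 0" using eA2456 eB12346 eB14567 eB23567 eC123457 by linarith
  have s_t3145: "t3 {1, 4, 5} = (- 1 / 2 * (A 1 1) + 1 / 2 * (A 2 2) + 1 / 2 * (A 3 3) - 1 / 2 * (A 4 4))" using eA2367 eB12347 eB12567 eB34567 eC123456 by linarith
  have s_t3146: "t3 {1, 4, 6} = 0" using eA1234 eA1256 eA1367 eA1457 eA2357 eA2467 eA3456 eE1234567 by linarith
  have s_t3147: "t3 {1, 4, 7} = 0" using eA2356 eB12345 eB13567 eB24567 eC123467 by linarith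
  have s_t3156: "t3 {1, 5, 6} = (- 1 / 2 * (C 1 1) - 1 / 2 * (C 2 2) + 1 / 2 * (C 3 3) + 1 / 2 * (C 4 4))" using eA2347 eB12367 eB12457 eB23456 eC134567 by linarith
  have s_t3157: "t3 {1, 5, 7} = 0" using eA2346 eB12456 eB13467 eB23457 eC123567 by linarith
  have s_t3167: "t3 {1, 6, 7} = 0" using eA2345 eB12356 eB13457 eB23467 eC124567 by linarith
  have s_t3234: "t3 {2, 3, 4} = (- 1 / 2 * (B 1 1) - 1 / 2 * (B 2 2) + 1 / 2 * (B 3 3) + 1 / 2 * (B 4 4))" using eA1567 eB12357 eB12467 eB13456 eC234567 by linarith
  have s_t3235: "t3 {2, 3, 5} = (1 / 2 * (A 1 1) - 1 / 2 * (A 2 2) + 1 / 2 * (A 3 3) - 1 / 2 * (A 4 4))" using eA1467 eB12347 eB12567 eB34567 eC123456 by linarith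
  have s_t3236: "t3 {2, 3, 6} = 0" using eA1234 eA1256 eA1367 eA1457 eA2357 eA2467 eA3456 eE1234567 by linarith
  have s_t3237: "t3 {2, 3, 7} = 0" using eA1456 eB12345 eB13567 eB24567 eC123467 by linarith
  have s_t3245: "t3 {2, 4, 5} = 0" using eA1234 eA1256 eA1367 eA1457 eA2357 eA2467 eA3456 eE1234567 by linarith
  have s_t3246: "t3 {2, 4, 6} = (1 / 2 * (A 1 1) - 1 / 2 * (A 2 2) + 1 / 2 * (A 3 3) - 1 / 2 * (A 4 4))" using eA1357 eB12347 eB12567 eB34567 eC123456 by linarith
  have s_t3247: "t3 {2, 4, 7} = 0" using eA1356 eB12346 eB14567 eB23567 eC123457 by linarith
  have s_t3256: "t3 {2, 5, 6} = (1 / 2 * (B 1 1) + 1 / 2 * (B 2 2) - 1 / 2 * (B 3 3) - 1 / 2 * (B 4 4))" using eA1347 eB12357 eB12467 eB13456 eC234567 by linarith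
  have s_t3257: "t3 {2, 5, 7} = 0" using eA1346 eB12356 eB13457 eB23467 eC124567 by linarith
  have s_t3267: "t3 {2, 6, 7} = 0" using eA1345 eB12456 eB13467 eB23457 eC123567 by linarith
  have s_t3345: "t3 {3, 4, 5} = 0" using eA1267 eB12346 eB14567 eB23567 eC123457 by linarith
  have s_t3346: "t3 {3, 4, 6} = 0" using eA1257 eB12345 eB13567 eB24567 eC123467 by linarith
  have s_t3347: "t3 {3, 4, 7} = 0" using eA1234 eA1256 eA1367 eA1457 eA2357 eA2467 eA3456 eE1234567 by linarith
  have s_t3356: "t3 {3, 5, 6} = 0" using eA1247 eB12456 eB13467 eB23457 eC123567 by linarith
  have s_t3357: "t3 {3, 5, 7} = (- 1 / 2 * (C 1 1) + 1 / 2 * (C 2 2) - 1 / 2 * (C 3 3) + 1 / 2 * (C 4 4))" using eA1246 eB12367 eB12457 eB23456 eC134567 by linarith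
  have s_t3367: "t3 {3, 6, 7} = (- 1 / 2 * (B 1 1) + 1 / 2 * (B 2 2) + 1 / 2 * (B 3 3) - 1 / 2 * (B 4 4))" using eA1245 eB12357 eB12467 eB13456 eC234567 by linarith
  have s_t3456: "t3 {4, 5, 6} = 0" using eA1237 eB12356 eB13457 eB23467 eC124567 by linarith
  have s_t3457: "t3 {4, 5, 7} = (1 / 2 * (B 1 1) - 1 / 2 * (B 2 2) - 1 / 2 * (B 3 3) + 1 / 2 * (B 4 4))" using eA1236 eB12357 eB12467 eB13456 eC234567 by linarith
  have s_t3467: "t3 {4, 6, 7} = (- 1 / 2 * (C 1 1) + 1 / 2 * (C 2 2) - 1 / 2 * (C 3 3) + 1 / 2 * (C 4 4))" using eA1235 eB12367 eB12457 eB23456 eC134567 by linarith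
  have s_t3567: "t3 {5, 6, 7} = 0" using eA1234 eA1256 eA1367 eA1457 eA2357 eA2467 eA3456 eE1234567 by linarith
  note sols = s_t0 s_t11 s_t12 s_t13 s_t14 s_t15 s_t16 s_t17 s_t212 s_t213 s_t214 s_t215 s_t216 s_t217 s_t223 s_t224 s_t225 s_t226 s_t227 s_t234 s_t235 s_t236 s_t237 s_t245 s_t246 s_t247 s_t256 s_t257 s_t267 s_t3123 s_t3124 s_t3125 s_t3126 s_t3127 s_t3134 s_t3135 s_t3136 s_t3137 s_t3145 s_t3146 s_t3147 s_t3156 s_t3157 s_t3167 s_t3234 s_t3235 s_t3236 s_t3237 s_t3245 s_t3246 s_t3247 s_t3256 s_t3257 s_t3267 s_t3345 s_t3346 s_t3347 s_t3356 s_t3357 s_t3367 s_t3456 s_t3457 s_t3467 s_t3567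
  have r1: "t1 = (\<lambda>_. 0)"
  proof (rule deg_form_eqI[OF dt1 deg_zero_form])
    fix I :: "nat set" assume "I \<subseteq> {1..7}" "card I = 1"
    thus "t1 I = 0"
      apply (rule enum1[where P="\<lambda>I. t1 I = 0"])
      by (insert sols sls; linarith)+
  qed
  have r2: "t2 = - hodge E2"
  proof (rule deg_form_eqI[OF dt2])
    show "deg_form 2 (- hodge E2)" using deg_uminus[OF deg_hodge[OF degE2]] by simp
    fix I :: "nat set" assume "I \<subseteq> {1..7}" "card I = 2"
    thus "t2 I = (- hodge E2) I"
      apply (rule enum2[where P="\<lambda>I. t2 I = (- hodge E2) I"])
      unfolding E2_def
      by (simp only: evalsimps sols; (insert sls, linarith)?)+
  qed
  have r3: "t3 = hodge E1"
  proof (rule deg_form_eqI[OF dt3])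
    show "deg_form 3 (hodge E1)" using deg_hodge[OF degE1] by simp
    fix I :: "nat set" assume "I \<subseteq> {1..7}" "card I = 3"
    thus "t3 I = hodge E1 I"
      apply (rule enum3[where P="\<lambda>I. t3 I = hodge E1 I"])
      unfolding E1_def
      by (simp only: evalsimps sols; (insert sls, linarith)?)+
  qed
  show ?thesis using s_t0 r1 r2 r3 by blast
qed

end

theorem corollary4p8:
  fixes A B C :: "nat \<Rightarrow> nat \<Rightarrow> real"
  assumes "sl4 A" "sl4 B" "sl4 C"
    and "diag4 A" "diag4 B" "diag4 C"
  shows "\<forall>t0 t1 t2 t3. is_torsion (gABC A B C) t0 t1 t2 t3 \<longleftrightarrow>
           (t0 = 0 \<and> t1 = (\<lambda>_. 0) \<and> t2 = - hodge (dform (gABC A B C) psi)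
            \<and> t3 = hodge (dform (gABC A B C) phi))"
  using fwd[OF assms(4-6,1-3)] bwd[OF assms(4-6,1-3)]
  unfolding D1[OF assms(4-6,1-3)] D2[OF assms(4-6,1-3)] by blast
end
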